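(* Let $k\ge 2$, $t\ge 0$, and consider a $t$-layer $k$-IGN whose activation functions belong to a collection $\Omega$. Then for every $j\in[d_t]$ there is an expression $\varphi_j\in\mathsf{TL}_k^{(tk)}(\Omega)$ with free variables among $x_1,\dots,x_k$ such that for every graph $G$ and every $\mathbf v\in V_G^k$, $[\![\varphi_j]\!]^{\mathbf v}_G=\mathbf F^{(t)}_{\mathbf v,j}$, where $\mathbf F^{(t)}$ is the tensor computed by the IGN on $G$.
   Context: Fix integers $n\ge 1$ and $\ell\ge 1$. A graph is a triple $G=(V_G,E_G,\mathrm{col}_G)$ with $V_G=[n]$, $E_G$ a set of unordered pairs of distinct vertices, and $\mathrm{col}_G:V_G\to\mathbb R^\ell$. Tensor language $\mathsf{TL}(\Omega)$: $\Omega$ is a collection of functions $f:\mathbb R^p\to\mathbb R$ ($p\ge1$ depending on $f$). Expressions: $\varphi::=\mathbf 1_{x=y}\mid \mathbf 1_{x\neq y}\mid E(x,y)\mid P_s(x)\mid \varphi\cdot\varphi\mid \varphi+\varphi\mid a\cdot\varphi\mid f(\varphi_1,\dots,\varphi_p)\mid \sum_x\varphi$ ($s\in[\ell]$, $a\in\mathbb R$, $f\in\Omega$), with the usual free variables ($\sum_x$ binds $x$). Semantics for a graph $G$ and valuation $\nu$ into $V_G$: $[\![E(x,y)]\!]^\nu_G=1$ if $\nu(x)\nu(y)\in E_G$ else $0$; $[\![P_s(x)]\!]^\nu_G=\mathrm{col}_G(\nu(x))_s$; $[\![\mathbf 1_{x\,\mathrm{op}\,y}]\!]^\nu_G=1$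 if $\nu(x)\,\mathrm{op}\,\nu(y)$ else $0$; $\cdot,+,a\cdot,f$ act on values; $[\![\sum_x\varphi]\!]^\nu_G=\sum_{v\in V_G}[\![\varphi]\!]^{\nu[x\mapsto v]}_G$. $[\![\varphi]\!]^{\mathbf v}_G$ denotes the value under $x_i\mapsto v_i$. Summation depth: $0$ for atoms, max over components for $\cdot,+,f(\dots)$, unchanged by $a\cdot$, $+1$ for $\sum_x$. $\mathsf{TL}_k^{(t)}(\Omega)$: expressions using only variables $x_1,\dots,x_k$ (re-binding allowed) of summation depth at most $t$. $k$-IGN. For $\mathbf v\in V_G^k$, $\mathsf{atp}_k(G,\mathbf v)\in\mathbb R^{d_0}$, $d_0=2\binom k2+k\ell$, lists for $1\le i<j\le k$ the indicators of $v_i=v_j$ and of $v_iv_j\in E_G$, and $\mathrm{col}_G(v_i)$ for $i\in[k]$. For $m\ge1$, $\sim_m$ is the equivalence on $[n]^m$ with $\mathbf a\sim_m\mathbf b$ iff for all $i,j\in[m]$: $a_i=a_j\Leftrightarrow b_i=b_j$; $[n]^m/{\sim_m}$ its classes. A $t$-layer $k$-IGN is given by dimensions $d_0,d_1,\dots,d_t$, real constants $c^{(r)}_{\gamma,i,j}$ ($\gamma\in[n]^{2k}/{\sim_{2k}}$, $i\in[d_{r-1}]$, $j\in[d_r]$), $b^{(r)}_{\mu,j}$ ($\mu\in[n]^k/{\sim_k}$) and activations $\sigma_r:\mathbb R\to\mathbb R$ for $r\in[t]$. On a graph $G$ it computes $\mathbf F^{(0)}\in\mathbb R^{n^k\times d_0}$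 with $\mathbf F^{(0)}_{\mathbf v,:}=\mathsf{atp}_k(G,\mathbf v)$, and for $r\in[t]$, $j\in[d_r]$, $\mathbf v\in[n]^k$: $$\mathbf F^{(r)}_{\mathbf v,j}=\sigma_r\Bigl(\sum_{\gamma\in[n]^{2k}/\sim_{2k}}\ \sum_{\mathbf w\in[n]^k}\mathbf 1_{(\mathbf v,\mathbf w)\in\gamma}\sum_{i\in[d_{r-1}]}c^{(r)}_{\gamma,i,j}\,\mathbf F^{(r-1)}_{\mathbf w,i}+\sum_{\mu\in[n]^k/\sim_k}\mathbf 1_{\mathbf v\in\mu}\,b^{(r)}_{\mu,j}\Bigr).$$ *)

theory Defs
  imports Complex_Main
begin

text \<open>Graphs on vertex set [n] = {0..<n} (0-based): a pair (E, col) with E a symmetric,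
irreflexive edge relation on [n] and col v s the s-th colour component (s < l, 0-based).\<close>

type_synonym graph = "(nat \<Rightarrow> nat \<Rightarrow> bool) \<times> (nat \<Rightarrow> nat \<Rightarrow> real)"

definition is_graph :: "nat \<Rightarrow> graph \<Rightarrow> bool" where
  "is_graph n G \<longleftrightarrow> (\<forall>u v. fst G u v \<longrightarrow> u < n \<and> v < n \<and> u \<noteq> v \<and> fst G v u)"

text \<open>Tensor language. Variables are natural numbers; x_1..x_k are 0..k-1.
A function symbol Fn p f args stands for f : R^p \<rightarrow> R (given on lists of length p).\<close>

datatype tl =
    EqI nat nat
  | NeqI nat nat
  | Edge nat nat
  | Col nat nat
  | Mul tl tl
  | Add tl tl
  | Scale real tl
  | Fn nat "real list \<Rightarrow> real" "tl list"
  | Sum nat tl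

fun tl_sem :: "nat \<Rightarrow> graph \<Rightarrow> (nat \<Rightarrow> nat) \<Rightarrow> tl \<Rightarrow> real" where
  "tl_sem n G \<nu> (EqI x y) = (if \<nu> x = \<nu> y then 1 else 0)"
| "tl_sem n G \<nu> (NeqI x y) = (if \<nu> x \<noteq> \<nu> y then 1 else 0)"
| "tl_sem n G \<nu> (Edge x y) = (if fst G (\<nu> x) (\<nu> y) then 1 else 0)"
| "tl_sem n G \<nu> (Col s x) = snd G (\<nu> x) s"
| "tl_sem n G \<nu> (Mul a b) = tl_sem n G \<nu> a * tl_sem n G \<nu> b"
| "tl_sem n G \<nu> (Add a b) = tl_sem n G \<nu> a + tl_sem n G \<nu> b"
| "tl_sem n G \<nu> (Scale c a) = c * tl_sem n G \<nu> a"
| "tl_sem n G \<nu> (Fn p f args) = f (map (tl_sem n G \<nu>) args)"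
| "tl_sem n G \<nu> (Sum x a) = (\<Sum>v<n. tl_sem n G (\<nu>(x := v)) a)"

fun sdepth :: "tl \<Rightarrow> nat" where
  "sdepth (EqI x y) = 0"
| "sdepth (NeqI x y) = 0"
| "sdepth (Edge x y) = 0"
| "sdepth (Col s x) = 0"
| "sdepth (Mul a b) = max (sdepth a) (sdepth b)"
| "sdepth (Add a b) = max (sdepth a) (sdepth b)"
| "sdepth (Scale c a) = sdepth a"
| "sdepth (Fn p f args) = fold max (map sdepth args) 0"
| "sdepth (Sum x a) = Suc (sdepth a)"

fun wf_tl :: "(nat \<times> (real list \<Rightarrow> real)) set \<Rightarrow> nat \<Rightarrow> nat \<Rightarrow> tl \<Rightarrow> bool" where
  "wf_tl \<Omega> l k (EqI x y) = (x < k \<and> y < k)"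
| "wf_tl \<Omega> l k (NeqI x y) = (x < k \<and> y < k)"
| "wf_tl \<Omega> l k (Edge x y) = (x < k \<and> y < k)"
| "wf_tl \<Omega> l k (Col s x) = (s < l \<and> x < k)"
| "wf_tl \<Omega> l k (Mul a b) = (wf_tl \<Omega> l k a \<and> wf_tl \<Omega> l k b)"
| "wf_tl \<Omega> l k (Add a b) = (wf_tl \<Omega> l k a \<and> wf_tl \<Omega> l k b)"
| "wf_tl \<Omega> l k (Scale c a) = wf_tl \<Omega> l k a"
| "wf_tl \<Omega> l k (Fn p f args) =
     ((p, f) \<in> \<Omega> \<and> length args = p \<and> (\<forall>a\<in>set args. wf_tl \<Omega> l k a))"
| "wf_tl \<Omega> l k (Sum x a) = (x < k \<and> wf_tl \<Omega> l k a)"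

definition TL :: "(nat \<times> (real list \<Rightarrow> real)) set \<Rightarrow> nat \<Rightarrow> nat \<Rightarrow> nat \<Rightarrow> tl set" where
  "TL \<Omega> l k t = {\<phi>. wf_tl \<Omega> l k \<phi> \<and> sdepth \<phi> \<le> t}"

definition tuples :: "nat \<Rightarrow> nat \<Rightarrow> nat list set" where
  "tuples n m = {xs. length xs = m \<and> set xs \<subseteq> {..<n}}"

definition eqtype_rel :: "nat \<Rightarrow> nat \<Rightarrow> (nat list \<times> nat list) set" where
  "eqtype_rel n m = {(a, b). a \<in> tuples n m \<and> b \<in> tuples n m \<and>
      (\<forall>i<m. \<forall>j<m. (a ! i = a ! j \<longleftrightarrow> b ! i = b ! j))}"

definition eq_classes :: "nat \<Rightarrow> nat \<Rightarrow> nat list set set" where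
  "eq_classes n m = tuples n m // eqtype_rel n m"

definition atp :: "nat \<Rightarrow> nat \<Rightarrow> graph \<Rightarrow> nat list \<Rightarrow> real list" where
  "atp k l G v =
     concat [[if v ! i = v ! j then 1 else 0, if fst G (v ! i) (v ! j) then 1 else 0].
               (i, j) \<leftarrow> concat [[(i, j). j \<leftarrow> [Suc i..<k]]. i \<leftarrow> [0..<k]]]
     @ concat [[snd G (v ! i) s. s \<leftarrow> [0..<l]]. i \<leftarrow> [0..<k]]"

text \<open>Features of a k-IGN: layer r \<ge> 1 uses c r, b r, sigma r; feature indices are 0-based,
i < d (r-1), j < d r.\<close>

primrec ign :: "nat \<Rightarrow> nat \<Rightarrow> nat \<Rightarrow> (nat \<Rightarrow> nat)
    \<Rightarrow> (nat \<Rightarrow> nat list set \<Rightarrow> nat \<Rightarrow> nat \<Rightarrow> real)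
    \<Rightarrow> (nat \<Rightarrow> nat list set \<Rightarrow> nat \<Rightarrow> real)
    \<Rightarrow> (nat \<Rightarrow> real \<Rightarrow> real) \<Rightarrow> graph \<Rightarrow> nat \<Rightarrow> nat list \<Rightarrow> nat \<Rightarrow> real" where
  "ign n l k d c b \<sigma> G 0 v j = atp k l G v ! j"
| "ign n l k d c b \<sigma> G (Suc r) v j =
     \<sigma> (Suc r)
       ((\<Sum>\<gamma>\<in>eq_classes n (2 * k). \<Sum>w\<in>tuples n k.
           (if v @ w \<in> \<gamma> then 1 else 0) *
           (\<Sum>i<d r. c (Suc r) \<gamma> i j * ign n l k d c b \<sigma> G r w i))
      + (\<Sum>\<mu>\<in>eq_classes n k. (if v \<in> \<mu> then 1 else 0) * b (Suc r) \<mu> j))"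

end

theory Submission
  imports Defs
begin

fun ren :: "(nat \<Rightarrow> nat) \<Rightarrow> tl \<Rightarrow> tl" where
  "ren \<pi> (EqI x y) = EqI (\<pi> x) (\<pi> y)"
| "ren \<pi> (NeqI x y) = NeqI (\<pi> x) (\<pi> y)"
| "ren \<pi> (Edge x y) = Edge (\<pi> x) (\<pi> y)"
| "ren \<pi> (Col s x) = Col s (\<pi> x)"
| "ren \<pi> (Mul a b) = Mul (ren \<pi> a) (ren \<pi> b)"
| "ren \<pi> (Add a b) = Add (ren \<pi> a) (ren \<pi> b)"
| "ren \<pi> (Scale c a) = Scale c (ren \<pi> a)"
| "ren \<pi> (Fn p f args) = Fn p f (map (ren \<pi>) args)"
| "ren \<pi> (Sum x a) = Sum (\<pi> x) (ren \<pi> a)"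

lemma ren_sem: "inj \<pi> \<Longrightarrow> tl_sem n G \<nu> (ren \<pi> \<phi>) = tl_sem n G (\<nu> \<circ> \<pi>) \<phi>"
proof (induction \<phi> arbitrary: \<nu>)
  case (Fn p f args)
  have h: "map (tl_sem n G \<nu> \<circ> ren \<pi>) args = map (tl_sem n G (\<nu> \<circ> \<pi>)) args"
    using Fn by (auto simp: comp_def)
  have "tl_sem n G \<nu> (ren \<pi> (Fn p f args)) = f (map (tl_sem n G \<nu> \<circ> ren \<pi>) args)" by simp
  also have "\<dots> = f (map (tl_sem n G (\<nu> \<circ> \<pi>)) args)" using h by (simp only:)
  finally show ?case by (simp only: tl_sem.simps)
next
  case (Sum x a)
  thus ?case using Sum.IH Sum.prems by (simp add: inj_eq fun_upd_def comp_def)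
qed auto

lemma ren_depth: "sdepth (ren \<pi> \<phi>) = sdepth \<phi>"
proof (induction \<phi>)
  case (Fn p f args)
  have h: "map (sdepth \<circ> ren \<pi>) args = map sdepth args" using Fn by auto
  have "sdepth (ren \<pi> (Fn p f args)) = fold max (map (sdepth \<circ> ren \<pi>) args) 0" by simp
  also have "\<dots> = fold max (map sdepth args) 0" using h by (simp only:)
  finally show ?case by (simp only: sdepth.simps)
qed auto

lemma ren_wf: "(\<forall>i<k. \<pi> i < k) \<Longrightarrow> wf_tl \<Omega> l k \<phi> \<Longrightarrow> wf_tl \<Omega> l k (ren \<pi> \<phi>)"
  by (induction \<phi>) auto

lemma prod_ind: "finite A \<Longrightarrow> (\<Prod>x\<in>A. if P x then 1 else 0 :: real) = (if \<forall>x\<in>A. P x then 1 else 0)"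
  by (induction A rule: finite_induct) auto

lemma prod_list_ind: "prod_list (map (\<lambda>x. if P x then 1 else 0 :: real) xs) = (if \<forall>x\<in>set xs. P x then 1 else 0)"
  by (induction xs) auto

lemma map_upd: "b < k \<Longrightarrow> map (\<nu>(b:=y)) [0..<k] = (map \<nu> [0..<k])[b:=y]"
  by (rule nth_equalityI) (auto simp: nth_list_update)

definition litval :: "nat list \<Rightarrow> nat list \<Rightarrow> nat \<times> nat \<times> bool \<Rightarrow> real" where
  "litval v w x = (if (v!(fst x) = w!(fst(snd x))) = snd(snd x) then 1 else 0)"

locale tlk =
  fixes n :: nat and \<Omega> :: "(nat \<times> (real list \<Rightarrow> real)) set" and l k :: nat
  assumes kpos: "0 < k"
begin

definition expr :: "nat \<Rightarrow> (graph \<Rightarrow> nat list \<Rightarrow> real) \<Rightarrow> bool" where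
 "expr D f \<longleftrightarrow> (\<exists>\<phi>. wf_tl \<Omega> l k \<phi> \<and> sdepth \<phi> \<le> D \<and>
     (\<forall>G \<nu>. (\<forall>i<k. \<nu> i < n) \<longrightarrow> tl_sem n G \<nu> \<phi> = f G (map \<nu> [0..<k])))"

lemma map_tuples: "(\<forall>i<k. \<nu> i < n) \<Longrightarrow> map \<nu> [0..<k] \<in> tuples n k"
  by (auto simp: tuples_def)

lemma tuples_nth: "v \<in> tuples n k \<Longrightarrow> i < k \<Longrightarrow> v ! i < n"
  using nth_mem by (fastforce simp: tuples_def)

lemma expr_cong: "expr D f \<Longrightarrow> (\<And>G v. v \<in> tuples n k \<Longrightarrow> f G v = g G v) \<Longrightarrow> expr D g"
  unfolding expr_def using map_tuples by metis

lemma expr_mono: "expr D f \<Longrightarrow> D \<le> D' \<Longrightarrow> expr D' f"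
  unfolding expr_def using le_trans by blast

lemma expr_const: "expr 0 (\<lambda>G v. c)"
  unfolding expr_def using kpos by (intro exI[of _ "Scale c (EqI 0 0)"]) auto

lemma expr_eq: "a < k \<Longrightarrow> b < k \<Longrightarrow> expr 0 (\<lambda>G v. if v!a = v!b then 1 else 0)"
  unfolding expr_def by (intro exI[of _ "EqI a b"]) auto

lemma expr_neq: "a < k \<Longrightarrow> b < k \<Longrightarrow> expr 0 (\<lambda>G v. if v!a \<noteq> v!b then 1 else 0)"
  unfolding expr_def by (intro exI[of _ "NeqI a b"]) auto

lemma expr_add: "expr D f \<Longrightarrow> expr D g \<Longrightarrow> expr D (\<lambda>G v. f G v + g G v)"
  unfolding expr_def
  apply (elim exE conjE)
  subgoal for \<phi> \<psi> by (intro exI[of _ "Add \<phi> \<psi>"]) auto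
  done

lemma expr_mult: "expr D f \<Longrightarrow> expr D' g \<Longrightarrow> expr (max D D') (\<lambda>G v. f G v * g G v)"
  unfolding expr_def
  apply (elim exE conjE)
  subgoal for \<phi> \<psi> by (intro exI[of _ "Mul \<phi> \<psi>"]) auto
  done

lemma expr_scale: "expr D f \<Longrightarrow> expr D (\<lambda>G v. a * f G v)"
  unfolding expr_def
  apply (elim exE conjE)
  subgoal for \<phi> by (intro exI[of _ "Scale a \<phi>"]) auto
  done

lemma expr_fn: "(1, f) \<in> \<Omega> \<Longrightarrow> (\<forall>x. f [x] = h x) \<Longrightarrow> expr D g \<Longrightarrow> expr D (\<lambda>G v. h (g G v))"
  unfolding expr_def
  apply (elim exE conjE)
  subgoal for \<phi> by (intro exI[of _ "Fn 1 f [\<phi>]"]) auto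
  done

lemma expr_sum: "(\<And>i. i \<in> A \<Longrightarrow> expr D (f i)) \<Longrightarrow> expr D (\<lambda>G v. \<Sum>i\<in>A. f i G v)"
proof (cases "finite A")
  case True
  assume "\<And>i. i \<in> A \<Longrightarrow> expr D (f i)"
  with True show ?thesis
  proof (induction A rule: finite_induct)
    case empty
    show ?case using expr_mono[OF expr_const[of 0]] by simp
  next
    case (insert x F)
    have "expr D (\<lambda>G v. f x G v + (\<Sum>i\<in>F. f i G v))"
      using insert by (intro expr_add) auto
    thus ?case using insert by simp
  qed
next
  case False
  thus ?thesis using expr_mono[OF expr_const[of 0]] by simp
qed

lemma expr_prod: "(\<And>i. i \<in> A \<Longrightarrow> expr D (f i)) \<Longrightarrow> expr D (\<lambda>G v. \<Prod>i\<in>A. f i G v)"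
proof (cases "finite A")
  case True
  assume "\<And>i. i \<in> A \<Longrightarrow> expr D (f i)"
  with True show ?thesis
  proof (induction A rule: finite_induct)
    case empty
    show ?case using expr_mono[OF expr_const[of 1]] by simp
  next
    case (insert x F)
    have "expr (max D D) (\<lambda>G v. f x G v * (\<Prod>i\<in>F. f i G v))"
      using insert by (intro expr_mult) auto
    thus ?case using insert by simp
  qed
next
  case False
  thus ?thesis using expr_mono[OF expr_const[of 1]] by simp
qed

lemma expr_bind: "b < k \<Longrightarrow> expr D f \<Longrightarrow> expr (Suc D) (\<lambda>G v. \<Sum>y<n. f G (v[b:=y]))"
  unfolding expr_def
  apply (elim exE conjE)
  subgoal for \<phi> by (intro exI[of _ "Sum b \<phi>"]) (auto simp: map_upd)
  done

lemma expr_copy: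
  assumes bk: "b < k" and ak: "a < k" and ab: "a \<noteq> b" and e: "expr D f"
  shows "expr (Suc D) (\<lambda>G v. f G (v[b := v!a]))"
proof -
  obtain \<phi> where H: "wf_tl \<Omega> l k \<phi>" "sdepth \<phi> \<le> D"
      "\<And>G \<nu>. (\<forall>i<k. \<nu> i < n) \<Longrightarrow> tl_sem n G \<nu> \<phi> = f G (map \<nu> [0..<k])"
    using e unfolding expr_def by blast
  have "tl_sem n G \<nu> (Sum b (Mul (EqI b a) \<phi>)) = f G ((map \<nu> [0..<k])[b := (map \<nu> [0..<k])!a])"
    if b: "\<forall>i<k. \<nu> i < n" for G \<nu>
  proof -
    have "tl_sem n G \<nu> (Sum b (Mul (EqI b a) \<phi>)) =
       (\<Sum>y<n. (if y = \<nu> a then 1 else 0) * f G ((map \<nu> [0..<k])[b:=y]))"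
      using H(3) b bk ak ab by (auto intro!: sum.cong simp: map_upd)
    also have "\<dots> = (\<Sum>y<n. if y = \<nu> a then f G ((map \<nu> [0..<k])[b:=y]) else 0)"
      by (rule sum.cong) auto
    also have "\<dots> = f G ((map \<nu> [0..<k])[b := \<nu> a])"
      by (subst sum.delta) (use b ak in auto)
    finally show ?thesis using ak by simp
  qed
  thus ?thesis unfolding expr_def using H bk ak
    by (intro exI[of _ "Sum b (Mul (EqI b a) \<phi>)"]) auto
qed

lemma expr_ren:
  assumes inj: "inj \<pi>" and pk: "\<forall>i<k. \<pi> i < k" and e: "expr D f"
  shows "expr D (\<lambda>G v. f G (map (\<lambda>i. v!(\<pi> i)) [0..<k]))"
proof -
  obtain \<phi> where H: "wf_tl \<Omega> l k \<phi>" "sdepth \<phi> \<le> D"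
      "\<And>G \<nu>. (\<forall>i<k. \<nu> i < n) \<Longrightarrow> tl_sem n G \<nu> \<phi> = f G (map \<nu> [0..<k])"
    using e unfolding expr_def by blast
  have "tl_sem n G \<nu> (ren \<pi> \<phi>) = f G (map (\<lambda>i. (map \<nu> [0..<k])!(\<pi> i)) [0..<k])"
    if b: "\<forall>i<k. \<nu> i < n" for G \<nu>
  proof -
    have "map (\<nu> \<circ> \<pi>) [0..<k] = map (\<lambda>i. map \<nu> [0..<k] ! (\<pi> i)) [0..<k]"
      using pk by auto
    moreover have "tl_sem n G (\<nu> \<circ> \<pi>) \<phi> = f G (map (\<nu> \<circ> \<pi>) [0..<k])"
      using pk b by (intro H(3)) auto
    ultimately show ?thesis using inj ren_sem by metis
  qed
  thus ?thesis unfolding expr_def using H pk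
    by (intro exI[of _ "ren \<pi> \<phi>"]) (auto simp: ren_depth ren_wf)
qed

end

context tlk begin

fun Qp :: "nat set \<Rightarrow> (nat \<Rightarrow> nat) \<Rightarrow> (graph \<Rightarrow> nat list \<Rightarrow> real) \<Rightarrow> nat list \<Rightarrow> graph \<Rightarrow> nat list \<Rightarrow> real" where
  "Qp B s g [] G v = g G v"
| "Qp B s g (b#ps) G v = (if b \<in> B then Qp B s g ps G (v[b := v!(s b)])
      else (\<Sum>y<n. Qp B s g ps G (v[b:=y])))"

lemma expr_Qp:
  assumes "expr D g"
  shows "set ps \<subseteq> {..<k} \<Longrightarrow> (\<forall>b\<in>set ps \<inter> B. s b < k \<and> s b \<noteq> b) \<Longrightarrow>
    expr (D + length ps) (Qp B s g ps)"
proof (induction ps)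
  case Nil
  thus ?case using assms by (auto elim: expr_cong)
next
  case (Cons b ps)
  have IH: "expr (D + length ps) (Qp B s g ps)" using Cons by auto
  show ?case
  proof (cases "b \<in> B")
    case True
    have "expr (Suc (D + length ps)) (\<lambda>G v. Qp B s g ps G (v[b := v!(s b)]))"
      using Cons.prems True by (intro expr_copy IH) auto
    thus ?thesis using True by (auto elim: expr_cong)
  next
    case False
    have "expr (Suc (D + length ps)) (\<lambda>G v. \<Sum>y<n. Qp B s g ps G (v[b:=y]))"
      using Cons.prems by (intro expr_bind IH) auto
    thus ?thesis using False by (auto elim: expr_cong)
  qed
qed

lemma tuples_upd: "v \<in> tuples n k \<Longrightarrow> y < n \<Longrightarrow> v[b:=y] \<in> tuples n k"
  by (auto simp: tuples_def dest: subsetD[OF set_update_subset_insert])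

lemma finite_tuples: "finite (tuples n m)"
proof -
  have "tuples n m = {xs. set xs \<subseteq> {..<n} \<and> length xs = m}" by (auto simp: tuples_def)
  thus ?thesis using finite_lists_length_eq[of "{..<n}" m] by simp
qed

lemma Qp_eq:
  assumes "distinct ps" "set ps \<subseteq> {..<k}" "\<forall>c\<in>set ps \<inter> B. s c < k \<and> s c \<notin> set ps"
    "v \<in> tuples n k"
  shows "Qp B s g ps G v = (\<Sum>w\<in>tuples n k.
      (if (\<forall>c<k. c \<notin> set ps \<longrightarrow> w!c = v!c) \<and> (\<forall>c\<in>set ps \<inter> B. w!c = v!(s c)) then 1 else 0) * g G w)"
  using assms
proof (induction ps arbitrary: v)
  case Nil
  have "(\<Sum>w\<in>tuples n k. (if (\<forall>c<k. c \<notin> set [] \<longrightarrow> w!c = v!c) \<and> (\<forall>c\<in>set [] \<inter> B. w!c = v!(s c)) then 1 else 0) * g G w)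
     = (\<Sum>w\<in>tuples n k. if w = v then g G w else 0)"
  proof (rule sum.cong)
    fix w assume "w \<in> tuples n k"
    hence "(\<forall>c<k. w!c = v!c) \<longleftrightarrow> w = v" using Nil.prems(4)
      by (auto simp: tuples_def intro: nth_equalityI)
    thus "(if (\<forall>c<k. c \<notin> set [] \<longrightarrow> w!c = v!c) \<and> (\<forall>c\<in>set [] \<inter> B. w!c = v!(s c)) then 1 else 0) * g G w
       = (if w = v then g G w else 0)" by auto
  qed simp
  also have "\<dots> = g G v" using Nil.prems(4) finite_tuples by (simp add: sum.delta')
  finally show ?case by simp
next
  case (Cons b ps)
  have bk: "b < k" and bps: "b \<notin> set ps" and lv: "length v = k" using Cons.prems by (auto simp: tuples_def)
  show ?case
  proof (cases "b \<in> B")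
    case True
    have sb: "s b < k" "s b \<noteq> b" using Cons.prems True by auto
    let ?v = "v[b := v!(s b)]"
    have tv: "?v \<in> tuples n k" using Cons.prems sb by (intro tuples_upd tuples_nth) auto
    have "Qp B s g (b#ps) G v = Qp B s g ps G ?v" using True by simp
    also have "\<dots> = (\<Sum>w\<in>tuples n k.
      (if (\<forall>c<k. c \<notin> set ps \<longrightarrow> w!c = ?v!c) \<and> (\<forall>c\<in>set ps \<inter> B. w!c = ?v!(s c)) then 1 else 0) * g G w)"
      using Cons.prems tv by (intro Cons.IH) auto
    also have "\<dots> = (\<Sum>w\<in>tuples n k.
      (if (\<forall>c<k. c \<notin> set (b#ps) \<longrightarrow> w!c = v!c) \<and> (\<forall>c\<in>set (b#ps) \<inter> B. w!c = v!(s c)) then 1 else 0) * g G w)"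
    proof (rule sum.cong[OF refl])
      fix w
      have sc: "\<forall>c\<in>set ps \<inter> B. s c \<noteq> b" using Cons.prems by auto
      have "((\<forall>c<k. c \<notin> set ps \<longrightarrow> w!c = ?v!c) \<and> (\<forall>c\<in>set ps \<inter> B. w!c = ?v!(s c))) \<longleftrightarrow>
        ((\<forall>c<k. c \<notin> set (b#ps) \<longrightarrow> w!c = v!c) \<and> (\<forall>c\<in>set (b#ps) \<inter> B. w!c = v!(s c)))"
        using bk bps lv True sc by (auto simp: nth_list_update)
      thus "(if (\<forall>c<k. c \<notin> set ps \<longrightarrow> w!c = ?v!c) \<and> (\<forall>c\<in>set ps \<inter> B. w!c = ?v!(s c)) then 1 else 0) * g G w =
        (if (\<forall>c<k. c \<notin> set (b#ps) \<longrightarrow> w!c = v!c) \<and> (\<forall>c\<in>set (b#ps) \<inter> B. w!c = v!(s c)) then 1 else 0) * g G w"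
        by simp
    qed
    finally show ?thesis .
  next
    case False
    let ?C = "\<lambda>v w. (\<forall>c<k. c \<notin> set ps \<longrightarrow> w!c = v!c) \<and> (\<forall>c\<in>set ps \<inter> B. w!c = v!(s c))"
    let ?C' = "\<lambda>w. (\<forall>c<k. c \<notin> set (b#ps) \<longrightarrow> w!c = v!c) \<and> (\<forall>c\<in>set (b#ps) \<inter> B. w!c = v!(s c))"
    have sc: "\<forall>c\<in>set ps \<inter> B. s c \<noteq> b" using Cons.prems by auto
    have "Qp B s g (b#ps) G v = (\<Sum>y<n. Qp B s g ps G (v[b:=y]))" using False by simp
    also have "\<dots> = (\<Sum>y<n. \<Sum>w\<in>tuples n k. (if ?C (v[b:=y]) w then 1 else 0) * g G w)"
      using Cons.prems by (intro sum.cong refl Cons.IH tuples_upd) auto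
    also have "\<dots> = (\<Sum>w\<in>tuples n k. \<Sum>y<n. (if ?C (v[b:=y]) w then 1 else 0) * g G w)"
      by (rule sum.swap)
    also have "\<dots> = (\<Sum>w\<in>tuples n k. (if ?C' w then 1 else 0) * g G w)"
    proof (rule sum.cong[OF refl])
      fix w assume w: "w \<in> tuples n k"
      have "\<And>y. ?C (v[b:=y]) w \<longleftrightarrow> (y = w!b \<and> ?C' w)"
        using bk bps lv False sc by (auto simp: nth_list_update)
      hence "(\<Sum>y<n. (if ?C (v[b:=y]) w then 1 else 0) * g G w) =
          (\<Sum>y<n. if y = w!b then (if ?C' w then 1 else 0) * g G w else 0)"
        by (intro sum.cong) auto
      also have "\<dots> = (if ?C' w then 1 else 0) * g G w"
        using tuples_nth[OF w bk] by (subst sum.delta) auto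
      finally show "(\<Sum>y<n. (if ?C (v[b:=y]) w then 1 else 0) * g G w) = (if ?C' w then 1 else 0) * g G w" .
    qed
    finally show ?thesis .
  qed
qed

end

context tlk begin

lemma expr_subst:
  assumes e: "expr D g" and Bk: "B \<subseteq> {..<k}" and sk: "\<forall>b\<in>B. s b < k"
  shows "expr (D + k) (\<lambda>G v. \<Sum>w\<in>tuples n k. (if \<forall>b\<in>B. w!b = v!(s b) then 1 else 0) * g G w)"
proof -
  define I where "I = s ` B"
  define rep where "rep c = (SOME b. b \<in> B \<and> s b = c)" for c
  have rep: "rep c \<in> B \<and> s (rep c) = c" if cI: "c \<in> I" for c
  proof -
    obtain b where "b \<in> B" "s b = c" using cI unfolding I_def by blast
    thus ?thesis unfolding rep_def by (intro someI[of "\<lambda>b. b \<in> B \<and> s b = c"]) blast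
  qed
  define s' where "s' b = rep (s b)" for b
  define X where "X = rep ` I"
  have Ik: "I \<subseteq> {..<k}" using sk I_def by auto
  have XB: "X \<subseteq> B" unfolding X_def using rep by blast
  hence Xk: "X \<subseteq> {..<k}" using Bk by auto
  have injrep: "inj_on rep I"
  proof (rule inj_onI)
    fix x y assume "x \<in> I" "y \<in> I" "rep x = rep y"
    hence "s (rep x) = s (rep y)" by simp
    thus "x = y" using rep[OF \<open>x \<in> I\<close>] rep[OF \<open>y \<in> I\<close>] by simp
  qed
  have cardX: "card X = card I" unfolding X_def using injrep by (rule card_image)
  have fX: "finite X" and fI: "finite I" using Xk Ik finite_subset by blast+
  have "card ({..<k} - X) = card ({..<k} - I)"
    using cardX card_Diff_subset[OF fX Xk] card_Diff_subset[OF fI Ik] by simp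
  then obtain h where h: "bij_betw h ({..<k} - X) ({..<k} - I)"
    using finite_same_card_bij[of "{..<k} - X" "{..<k} - I"] by blast
  define \<pi> where "\<pi> i = (if i \<in> X then s i else if i < k then h i else i)" for i
  have sX: "x \<in> X \<Longrightarrow> s x \<in> I" for x using XB I_def by blast
  have injX: "x = y" if xy: "x \<in> X" "y \<in> X" "s x = s y" for x y
  proof -
    obtain c where c: "c \<in> I" "x = rep c" using xy X_def by blast
    obtain c' where c': "c' \<in> I" "y = rep c'" using xy X_def by blast
    have "c = c'" using rep[OF c(1)] rep[OF c'(1)] c c' xy(3) by simp
    thus ?thesis using c c' by simp
  qed
  have hI: "h x < k \<and> h x \<notin> I" if xh: "x < k" "x \<notin> X" for x
  proof -
    have "h x \<in> {..<k} - I" by (rule bij_betw_apply[OF h]) (use xh in blast)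
    thus ?thesis by blast
  qed
  have hinj: "x = y" if "x < k" "x \<notin> X" "y < k" "y \<notin> X" "h x = h y" for x y
    using inj_onD[OF bij_betw_imp_inj_on[OF h]] that by blast
  have inj: "inj \<pi>"
  proof (rule injI)
    fix x y assume e: "\<pi> x = \<pi> y"
    show "x = y"
    proof (cases "x \<in> X")
      case xX: True
      show ?thesis
      proof (cases "y \<in> X")
        case True thus ?thesis using xX e injX unfolding \<pi>_def by simp
      next
        case False
        have "s x \<in> I" "s x < k" using sX xX Ik by auto
        thus ?thesis using False xX e hI[of y] unfolding \<pi>_def by (auto split: if_splits)
      qed
    next
      case xX: False
      show ?thesis
      proof (cases "y \<in> X")
        case True
        have "s y \<in> I" "s y < k" using sX True Ik by auto
        thus ?thesis using True xX e hI[of x] unfolding \<pi>_def by (auto split: if_splits)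
      next
        case False
        thus ?thesis using xX e hI[of x] hI[of y] hinj[of x y] unfolding \<pi>_def
          by (auto split: if_splits)
      qed
    qed
  qed
  have pk: "\<forall>i<k. \<pi> i < k" unfolding \<pi>_def using sX Ik hI by auto
  have s'B: "s' b \<in> B" "s (s' b) = s b" "s' (s' b) = s' b" "s' b < k" "\<pi> (s' b) = s b"
    if "b \<in> B" for b
  proof -
    have "s b \<in> I" using that I_def by auto
    thus "s' b \<in> B" "s (s' b) = s b" using rep s'_def by auto
    thus "s' (s' b) = s' b" "s' b < k" using s'_def Bk by auto
    have "s' b \<in> X" using \<open>s b \<in> I\<close> s'_def X_def by auto
    thus "\<pi> (s' b) = s b" using \<open>s (s' b) = s b\<close> \<pi>_def by auto
  qed
  define F where "F = {b\<in>B. s' b = b}"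
  define ps where "ps = filter (\<lambda>b. b \<notin> F) [0..<k]"
  have setps: "set ps = {..<k} - F" unfolding ps_def by auto
  have lps: "length ps \<le> k" unfolding ps_def using length_filter_le[of _ "[0..<k]"] by simp
  define \<Psi> where "\<Psi> G v' = (\<Sum>w\<in>tuples n k. (if \<forall>b\<in>B. w!b = v'!(s' b) then 1 else 0) * g G w)" for G v'
  have "expr (D + length ps) (Qp B s' g ps)"
    using e setps s'B F_def by (intro expr_Qp) auto
  hence e1: "expr (D + k) (Qp B s' g ps)" by (rule expr_mono) (use lps in simp)
  have e2: "expr (D + k) \<Psi>"
  proof (rule expr_cong[OF e1])
    fix G v' assume v': "v' \<in> tuples n k"
    have "Qp B s' g ps G v' = (\<Sum>w\<in>tuples n k.
      (if (\<forall>c<k. c \<notin> set ps \<longrightarrow> w!c = v'!c) \<and> (\<forall>c\<in>set ps \<inter> B. w!c = v'!(s' c)) then 1 else 0) * g G w)"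
      using v' setps s'B F_def unfolding ps_def by (intro Qp_eq) auto
    also have "\<dots> = \<Psi> G v'" unfolding \<Psi>_def
    proof (rule sum.cong[OF refl])
      fix w
      have "((\<forall>c<k. c \<notin> set ps \<longrightarrow> w!c = v'!c) \<and> (\<forall>c\<in>set ps \<inter> B. w!c = v'!(s' c)))
        \<longleftrightarrow> (\<forall>b\<in>B. w!b = v'!(s' b))" (is "?L \<longleftrightarrow> ?R")
      proof
        assume L: ?L
        show ?R
        proof
          fix b assume b: "b \<in> B"
          show "w!b = v'!(s' b)"
          proof (cases "s' b = b")
            case True thus ?thesis using L b Bk F_def setps by auto
          next
            case False thus ?thesis using L b Bk F_def setps by auto
          qed
        qed
      next
        assume R: ?R show ?L using R setps F_def Bk by auto
      qed
      thus "(if (\<forall>c<k. c \<notin> set ps \<longrightarrow> w!c = v'!c) \<and> (\<forall>c\<in>set ps \<inter> B. w!c = v'!(s' c)) then 1 else 0) * g G w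
        = (if \<forall>b\<in>B. w!b = v'!(s' b) then 1 else 0) * g G w" by simp
    qed
    finally show "Qp B s' g ps G v' = \<Psi> G v'" .
  qed
  have e3: "expr (D + k) (\<lambda>G v. \<Psi> G (map (\<lambda>i. v!(\<pi> i)) [0..<k]))"
    by (rule expr_ren[OF inj pk e2])
  show ?thesis
  proof (rule expr_cong[OF e3])
    fix G v assume v: "v \<in> tuples n k"
    have "\<And>b. b \<in> B \<Longrightarrow> map (\<lambda>i. v!(\<pi> i)) [0..<k] ! (s' b) = v!(s b)"
      using s'B by auto
    thus "\<Psi> G (map (\<lambda>i. v!(\<pi> i)) [0..<k]) = (\<Sum>w\<in>tuples n k. (if \<forall>b\<in>B. w!b = v!(s b) then 1 else 0) * g G w)"
      unfolding \<Psi>_def by (intro sum.cong refl) auto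
  qed
qed

end

context tlk begin

lemma expr_eqs:
  assumes "finite A" "\<forall>x\<in>A. f1 x < k \<and> f2 x < k"
  shows "expr 0 (\<lambda>G v. if \<forall>x\<in>A. (v!(f1 x) = v!(f2 x)) = p x then 1 else 0)"
proof -
  have "expr 0 (\<lambda>G v. \<Prod>x\<in>A. if (v!(f1 x) = v!(f2 x)) = p x then 1 else 0)"
  proof (rule expr_prod)
    fix x assume x: "x \<in> A"
    show "expr 0 (\<lambda>G v. if (v!(f1 x) = v!(f2 x)) = p x then 1 else 0)"
    proof (cases "p x")
      case True
      thus ?thesis using expr_eq[of "f1 x" "f2 x"] assms x by simp
    next
      case False
      thus ?thesis using expr_neq[of "f1 x" "f2 x"] assms x by simp
    qed
  qed
  thus ?thesis using assms(1) by (simp add: prod_ind)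
qed

lemma expr_pos:
  assumes e: "expr D g" and lits: "\<forall>x\<in>set lits. fst x < k \<and> fst (snd x) < k \<and> snd (snd x)"
  shows "expr (D + k) (\<lambda>G v. \<Sum>w\<in>tuples n k. prod_list (map (litval v w) lits) * g G w)"
proof -
  define S where "S = set lits"
  define B where "B = (fst \<circ> snd) ` S"
  define s where "s b = (LEAST a. (a, b, True) \<in> S)" for b
  have sS: "(s b, b, True) \<in> S" if bB: "b \<in> B" for b
  proof -
    obtain x where x: "x \<in> S" "b = fst (snd x)" using bB B_def by auto
    hence "(fst x, b, True) \<in> S" using lits S_def by (cases x) auto
    thus ?thesis unfolding s_def by (rule LeastI)
  qed
  have Bk: "B \<subseteq> {..<k}" using lits unfolding B_def S_def by auto
  have sk: "\<forall>b\<in>B. s b < k" using sS lits S_def by fastforce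
  have fS: "finite S" unfolding S_def by simp
  have e1: "expr 0 (\<lambda>G v. if \<forall>x\<in>S. (v!(fst x) = v!(s (fst (snd x)))) = True then 1 else 0)"
    using fS lits sk B_def S_def by (intro expr_eqs) auto
  have e2: "expr (D + k) (\<lambda>G v. \<Sum>w\<in>tuples n k. (if \<forall>b\<in>B. w!b = v!(s b) then 1 else 0) * g G w)"
    by (rule expr_subst[OF e Bk sk])
  have e3: "expr (D + k) (\<lambda>G v. (if \<forall>x\<in>S. (v!(fst x) = v!(s (fst (snd x)))) = True then 1 else 0) *
        (\<Sum>w\<in>tuples n k. (if \<forall>b\<in>B. w!b = v!(s b) then 1 else 0) * g G w))"
    using expr_mult[OF e1 e2] by simp
  show ?thesis
  proof (rule expr_cong[OF e3])
    fix G v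
    have "prod_list (map (litval v w) lits) =
       (if \<forall>x\<in>S. (v!(fst x) = v!(s (fst (snd x)))) = True then 1 else 0) *
       (if \<forall>b\<in>B. w!b = v!(s b) then 1 else 0)" for w
    proof -
      have pl: "prod_list (map (litval v w) lits) = (if \<forall>x\<in>S. v!(fst x) = w!(fst (snd x)) then 1 else 0)"
        unfolding litval_def S_def using prod_list_ind[of "\<lambda>x. (v!(fst x) = w!(fst(snd x))) = snd(snd x)" lits] lits
        by (simp cong: if_cong)
      have "(\<forall>x\<in>S. v!(fst x) = w!(fst (snd x))) \<longleftrightarrow>
        (\<forall>x\<in>S. v!(fst x) = v!(s (fst (snd x)))) \<and> (\<forall>b\<in>B. w!b = v!(s b))" (is "?L \<longleftrightarrow> ?R")
      proof
        assume L: ?L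
        have R2: "\<forall>b\<in>B. w!b = v!(s b)" using L sS by fastforce
        moreover have "\<forall>x\<in>S. v!(fst x) = v!(s (fst (snd x)))"
        proof
          fix x assume x: "x \<in> S"
          hence "fst (snd x) \<in> B" unfolding B_def by auto
          thus "v!(fst x) = v!(s (fst (snd x)))" using L x R2 by auto
        qed
        ultimately show ?R by blast
      next
        assume R: ?R
        show ?L
        proof
          fix x assume x: "x \<in> S"
          hence "fst (snd x) \<in> B" unfolding B_def by auto
          thus "v!(fst x) = w!(fst (snd x))" using R x by auto
        qed
      qed
      thus ?thesis using pl by simp
    qed
    thus "(if \<forall>x\<in>S. (v!(fst x) = v!(s (fst (snd x)))) = True then 1 else 0) *
        (\<Sum>w\<in>tuples n k. (if \<forall>b\<in>B. w!b = v!(s b) then 1 else 0) * g G w) =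
      (\<Sum>w\<in>tuples n k. prod_list (map (litval v w) lits) * g G w)"
      by (simp add: sum_distrib_left mult.assoc)
  qed
qed

lemma expr_lits:
  assumes e: "expr D g"
  shows "\<forall>x\<in>set lits. fst x < k \<and> fst (snd x) < k \<Longrightarrow>
    expr (D + k) (\<lambda>G v. \<Sum>w\<in>tuples n k. prod_list (map (litval v w) lits) * g G w)"
proof (induction "length (filter (\<lambda>x. \<not> snd (snd x)) lits)" arbitrary: lits rule: less_induct)
  case less
  show ?case
  proof (cases "\<exists>x\<in>set lits. \<not> snd (snd x)")
    case False
    thus ?thesis using expr_pos[OF e] less.prems by auto
  next
    case True
    then obtain x where x: "x \<in> set lits" "\<not> snd (snd x)" by blast
    obtain xs ys where lits: "lits = xs @ x # ys" using split_list[OF x(1)] by blast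
    obtain a b where xe: "x = (a, b, False)" using x(2) by (cases x) auto
    have m1: "length (filter (\<lambda>x. \<not> snd (snd x)) (xs @ ys)) < length (filter (\<lambda>x. \<not> snd (snd x)) lits)"
      using lits xe by simp
    have m2: "length (filter (\<lambda>x. \<not> snd (snd x)) ((a, b, True) # xs @ ys)) < length (filter (\<lambda>x. \<not> snd (snd x)) lits)"
      using lits xe by simp
    have e1: "expr (D + k) (\<lambda>G v. \<Sum>w\<in>tuples n k. prod_list (map (litval v w) (xs @ ys)) * g G w)"
      using less.hyps[OF m1] less.prems lits by auto
    have e2: "expr (D + k) (\<lambda>G v. \<Sum>w\<in>tuples n k. prod_list (map (litval v w) ((a, b, True) # xs @ ys)) * g G w)"
      using less.hyps[OF m2] less.prems lits xe by auto
    have e3: "expr (D + k) (\<lambda>G v. (\<Sum>w\<in>tuples n k. prod_list (map (litval v w) (xs @ ys)) * g G w)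
       + (-1) * (\<Sum>w\<in>tuples n k. prod_list (map (litval v w) ((a, b, True) # xs @ ys)) * g G w))"
      by (rule expr_add[OF e1 expr_scale[OF e2]])
    show ?thesis
    proof (rule expr_cong[OF e3])
      fix G v
      have "prod_list (map (litval v w) lits) = prod_list (map (litval v w) (xs @ ys))
          - prod_list (map (litval v w) ((a, b, True) # xs @ ys))" for w
        by (simp add: lits xe litval_def algebra_simps)
      thus "(\<Sum>w\<in>tuples n k. prod_list (map (litval v w) (xs @ ys)) * g G w)
       + (-1) * (\<Sum>w\<in>tuples n k. prod_list (map (litval v w) ((a, b, True) # xs @ ys)) * g G w)
       = (\<Sum>w\<in>tuples n k. prod_list (map (litval v w) lits) * g G w)"
        by (simp add: sum_subtractf left_diff_distrib)
    qed
  qed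
qed

lemma all_2k: "(\<forall>i<2*k. P i) \<longleftrightarrow> (\<forall>i<k. P i) \<and> (\<forall>i<k. P (k+i))"
proof
  assume "(\<forall>i<k. P i) \<and> (\<forall>i<k. P (k+i))"
  thus "\<forall>i<2*k. P i"
    by (metis add_diff_inverse_nat mult_2 nat_add_left_cancel_less)
qed auto

lemma expr_type:
  assumes e: "expr D g"
  shows "expr (D + k) (\<lambda>G v. \<Sum>w\<in>tuples n k.
     (if \<forall>i<2*k. \<forall>j<2*k. (r!i = r!j) = ((v@w)!i = (v@w)!j) then 1 else 0) * g G w)"
proof -
  define lits where "lits = concat (map (\<lambda>a. map (\<lambda>b. (a, b, r!a = r!(k+b))) [0..<k]) [0..<k])"
  have slits: "set lits = {(a, b, r!a = r!(k+b)) | a b. a < k \<and> b < k}" unfolding lits_def by auto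
  define Cw where "Cw G w = (if \<forall>x\<in>{..<k}\<times>{..<k}. (w!(fst x) = w!(snd x)) = (r!(k+fst x) = r!(k+snd x)) then 1 else 0) * g G w" for G w
  have ew: "expr (max 0 D) Cw" unfolding Cw_def
    by (rule expr_mult[OF expr_eqs e]) auto
  have e1: "expr (D + k) (\<lambda>G v. \<Sum>w\<in>tuples n k. prod_list (map (litval v w) lits) * Cw G w)"
    using expr_lits[of D Cw lits] ew slits by auto
  have ev: "expr 0 (\<lambda>G v. if \<forall>x\<in>{..<k}\<times>{..<k}. (v!(fst x) = v!(snd x)) = (r!(fst x) = r!(snd x)) then 1 else 0)"
    by (rule expr_eqs) auto
  have e2: "expr (D + k) (\<lambda>G v. (if \<forall>x\<in>{..<k}\<times>{..<k}. (v!(fst x) = v!(snd x)) = (r!(fst x) = r!(snd x)) then 1 else 0)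
       * (\<Sum>w\<in>tuples n k. prod_list (map (litval v w) lits) * Cw G w))"
    using expr_mult[OF ev e1] by simp
  show ?thesis
  proof (rule expr_cong[OF e2])
    fix G v assume v: "v \<in> tuples n k"
    have lv: "length v = k" using v by (simp add: tuples_def)
    have "(if \<forall>i<2*k. \<forall>j<2*k. (r!i = r!j) = ((v@w)!i = (v@w)!j) then 1 else 0) * g G w =
      (if \<forall>x\<in>{..<k}\<times>{..<k}. (v!(fst x) = v!(snd x)) = (r!(fst x) = r!(snd x)) then 1 else 0)
       * (prod_list (map (litval v w) lits) * Cw G w)" for w
    proof -
      have pl: "prod_list (map (litval v w) lits) =
        (if \<forall>x\<in>set lits. (v!(fst x) = w!(fst(snd x))) = snd(snd x) then 1 else 0)"
        unfolding litval_def by (rule prod_list_ind)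
      have "(\<forall>i<2*k. \<forall>j<2*k. (r!i = r!j) = ((v@w)!i = (v@w)!j)) \<longleftrightarrow>
        (\<forall>i<k. \<forall>j<k. (r!i = r!j) = (v!i = v!j) \<and> (r!i = r!(k+j)) = (v!i = w!j)
           \<and> (r!(k+i) = r!j) = (w!i = v!j) \<and> (r!(k+i) = r!(k+j)) = (w!i = w!j))"
        unfolding all_2k using lv by (auto simp: nth_append)
      also have "\<dots> \<longleftrightarrow> (\<forall>x\<in>{..<k}\<times>{..<k}. (v!(fst x) = v!(snd x)) = (r!(fst x) = r!(snd x)))
         \<and> (\<forall>x\<in>set lits. (v!(fst x) = w!(fst(snd x))) = snd(snd x))
         \<and> (\<forall>x\<in>{..<k}\<times>{..<k}. (w!(fst x) = w!(snd x)) = (r!(k+fst x) = r!(k+snd x)))"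
        unfolding slits by (auto simp: eq_commute)
      finally show ?thesis unfolding pl Cw_def by simp
    qed
    thus "(if \<forall>x\<in>{..<k}\<times>{..<k}. (v!(fst x) = v!(snd x)) = (r!(fst x) = r!(snd x)) then 1 else 0)
       * (\<Sum>w\<in>tuples n k. prod_list (map (litval v w) lits) * Cw G w) =
      (\<Sum>w\<in>tuples n k. (if \<forall>i<2*k. \<forall>j<2*k. (r!i = r!j) = ((v@w)!i = (v@w)!j) then 1 else 0) * g G w)"
      by (simp add: sum_distrib_left)
  qed
qed

end

definition atpE :: "nat \<Rightarrow> nat \<Rightarrow> tl list" where
  "atpE k l = concat [[EqI i j, Edge i j]. (i, j) \<leftarrow> concat [[(i, j). j \<leftarrow> [Suc i..<k]]. i \<leftarrow> [0..<k]]]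
     @ concat [[Col s i. s \<leftarrow> [0..<l]]. i \<leftarrow> [0..<k]]"

lemma atpE_sem: "map (tl_sem n G \<nu>) (atpE k l) = atp k l G (map \<nu> [0..<k])"
  unfolding atpE_def atp_def
  apply (simp add: map_concat comp_def case_prod_beta)
  apply (intro arg_cong2[where f="(@)"] arg_cong[where f=concat] map_cong refl)
  apply auto
  done

lemma atpE_wf: "\<phi> \<in> set (atpE k l) \<Longrightarrow> wf_tl \<Omega> l k \<phi> \<and> sdepth \<phi> = 0"
  unfolding atpE_def by auto

lemma sum_choose2: "(\<Sum>i<k. k - Suc i) = k choose 2"
proof (induction k)
  case (Suc k)
  have "(\<Sum>i<Suc k. Suc k - Suc i) = (\<Sum>i<k. k - i)"
    by (subst sum.lessThan_Suc) simp
  also have "\<dots> = (\<Sum>i<k. k - Suc i) + k"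
  proof -
    have "(\<Sum>i<k. k - i) = (\<Sum>i<k. (k - Suc i) + 1)" by (rule sum.cong) auto
    also have "\<dots> = (\<Sum>i<k. k - Suc i) + (\<Sum>i<k. 1)" by (rule sum.distrib)
    finally show ?thesis by simp
  qed
  finally show ?case using Suc by (simp add: numeral_2_eq_2)
qed simp

lemma atpE_len: "length (atpE k l) = 2 * (k choose 2) + k * l"
proof -
  have "length (concat [[(i, j). j \<leftarrow> [Suc i..<k]]. i \<leftarrow> [0..<k]]) = (\<Sum>i<k. k - Suc i)"
    by (simp add: length_concat sum_list_sum_nth atLeast0LessThan comp_def)
  thus ?thesis unfolding atpE_def
    by (simp add: length_concat comp_def case_prod_beta sum_list_triv sum_choose2)
qed

context tlk begin

lemma expr_layer0: "j < length (atpE k l) \<Longrightarrow> expr 0 (\<lambda>G v. atp k l G v ! j)"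
  unfolding expr_def
proof (intro exI[of _ "atpE k l ! j"] conjI allI impI)
  assume j: "j < length (atpE k l)"
  hence "atpE k l ! j \<in> set (atpE k l)" by (rule nth_mem)
  thus "wf_tl \<Omega> l k (atpE k l ! j)" "sdepth (atpE k l ! j) \<le> 0" using atpE_wf by auto
  fix G \<nu>
  have "tl_sem n G \<nu> (atpE k l ! j) = map (tl_sem n G \<nu>) (atpE k l) ! j" using j by simp
  thus "tl_sem n G \<nu> (atpE k l ! j) = atp k l G (map \<nu> [0..<k]) ! j" by (simp add: atpE_sem)
qed

end

theorem mainTheorem8:
  fixes n l k t :: nat
    and \<Omega> :: "(nat \<times> (real list \<Rightarrow> real)) set"
    and d :: "nat \<Rightarrow> nat"
    and c :: "nat \<Rightarrow> nat list set \<Rightarrow> nat \<Rightarrow> nat \<Rightarrow> real"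
    and b :: "nat \<Rightarrow> nat list set \<Rightarrow> nat \<Rightarrow> real"
    and \<sigma> :: "nat \<Rightarrow> real \<Rightarrow> real"
  assumes "n \<ge> 1" and "l \<ge> 1" and "k \<ge> 2"
    and "d 0 = 2 * (k choose 2) + k * l"
    and "\<forall>r\<in>{1..t}. \<exists>f. (1, f) \<in> \<Omega> \<and> (\<forall>x. f [x] = \<sigma> r x)"
  shows "\<forall>j < d t. \<exists>\<phi> \<in> TL \<Omega> l k (t * k).
           \<forall>G v. is_graph n G \<longrightarrow> v \<in> tuples n k \<longrightarrow>
             tl_sem n G (\<lambda>i. v ! i) \<phi> = ign n l k d c b \<sigma> G t v j"
proof -
  interpret tlk n \<Omega> l k using assms(3) by unfold_locales simp
  have main: "expr (r * k) (\<lambda>G v. ign n l k d c b \<sigma> G r v j)" if "r \<le> t" "j < d r" for r j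
    using that
  proof (induction r arbitrary: j)
    case 0
    thus ?case using expr_layer0[of j] atpE_len assms(4) by simp
  next
    case (Suc r)
    have IH: "expr (r * k) (\<lambda>G v. ign n l k d c b \<sigma> G r v i)" if "i < d r" for i
      using Suc.IH Suc.prems that by auto
    have "Suc r \<in> {1..t}" using Suc.prems(1) by simp
    then obtain f where f: "(1, f) \<in> \<Omega>" "\<forall>x. f [x] = \<sigma> (Suc r) x"
      using assms(5) by blast
    have eA: "expr (Suc r * k) (\<lambda>G v. \<Sum>\<gamma>\<in>eq_classes n (2 * k). \<Sum>w\<in>tuples n k.
           (if v @ w \<in> \<gamma> then 1 else 0) *
           (\<Sum>i<d r. c (Suc r) \<gamma> i j * ign n l k d c b \<sigma> G r w i))"
    proof (rule expr_sum)
      fix \<gamma> assume \<gamma>: "\<gamma> \<in> eq_classes n (2 * k)"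
      obtain r0 where r0: "r0 \<in> tuples n (2*k)" "\<gamma> = eqtype_rel n (2*k) `` {r0}"
        using \<gamma> unfolding eq_classes_def by (auto elim: quotientE)
      have "expr (Suc r * k) (\<lambda>G v. \<Sum>i<d r. c (Suc r) \<gamma> i j * (\<Sum>w\<in>tuples n k.
         (if \<forall>i<2*k. \<forall>j<2*k. (r0!i = r0!j) = ((v@w)!i = (v@w)!j) then 1 else 0) * ign n l k d c b \<sigma> G r w i))"
      proof (rule expr_sum)
        fix i assume "i \<in> {..<d r}"
        hence "expr (r * k + k) (\<lambda>G v. \<Sum>w\<in>tuples n k.
         (if \<forall>i<2*k. \<forall>j<2*k. (r0!i = r0!j) = ((v@w)!i = (v@w)!j) then 1 else 0) * ign n l k d c b \<sigma> G r w i)"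
          using IH by (intro expr_type) auto
        thus "expr (Suc r * k) (\<lambda>G v. c (Suc r) \<gamma> i j * (\<Sum>w\<in>tuples n k.
         (if \<forall>i<2*k. \<forall>j<2*k. (r0!i = r0!j) = ((v@w)!i = (v@w)!j) then 1 else 0) * ign n l k d c b \<sigma> G r w i))"
          by (intro expr_scale) (simp add: add.commute)
      qed
      thus "expr (Suc r * k) (\<lambda>G v. \<Sum>w\<in>tuples n k.
           (if v @ w \<in> \<gamma> then 1 else 0) *
           (\<Sum>i<d r. c (Suc r) \<gamma> i j * ign n l k d c b \<sigma> G r w i))"
      proof (rule expr_cong)
        fix G v assume v: "v \<in> tuples n k"
        have mem: "(v @ w \<in> \<gamma>) \<longleftrightarrow> (\<forall>i<2*k. \<forall>j<2*k. (r0!i = r0!j) = ((v@w)!i = (v@w)!j))"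
          if w: "w \<in> tuples n k" for w
        proof -
          have "v @ w \<in> tuples n (2*k)" using v w by (auto simp: tuples_def)
          thus ?thesis using r0 unfolding eqtype_rel_def by auto
        qed
        have "(\<Sum>i<d r. c (Suc r) \<gamma> i j * (\<Sum>w\<in>tuples n k.
         (if \<forall>i<2*k. \<forall>j<2*k. (r0!i = r0!j) = ((v@w)!i = (v@w)!j) then 1 else 0) * ign n l k d c b \<sigma> G r w i))
          = (\<Sum>w\<in>tuples n k. \<Sum>i<d r. (if \<forall>i<2*k. \<forall>j<2*k. (r0!i = r0!j) = ((v@w)!i = (v@w)!j) then 1 else 0) *
              (c (Suc r) \<gamma> i j * ign n l k d c b \<sigma> G r w i))"
          by (subst sum.swap) (simp add: sum_distrib_left mult.assoc mult.left_commute)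
        also have "\<dots> = (\<Sum>w\<in>tuples n k. (if v @ w \<in> \<gamma> then 1 else 0) *
           (\<Sum>i<d r. c (Suc r) \<gamma> i j * ign n l k d c b \<sigma> G r w i))"
          by (rule sum.cong[OF refl]) (simp add: mem sum_distrib_left)
        finally show "(\<Sum>i<d r. c (Suc r) \<gamma> i j * (\<Sum>w\<in>tuples n k.
         (if \<forall>i<2*k. \<forall>j<2*k. (r0!i = r0!j) = ((v@w)!i = (v@w)!j) then 1 else 0) * ign n l k d c b \<sigma> G r w i))
          = (\<Sum>w\<in>tuples n k. (if v @ w \<in> \<gamma> then 1 else 0) *
           (\<Sum>i<d r. c (Suc r) \<gamma> i j * ign n l k d c b \<sigma> G r w i))" .
      qed
    qed
    have eB: "expr 0 (\<lambda>G v. \<Sum>\<mu>\<in>eq_classes n k. (if v \<in> \<mu> then 1 else 0) * b (Suc r) \<mu> j)"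
    proof (rule expr_sum)
      fix \<mu> assume \<mu>: "\<mu> \<in> eq_classes n k"
      obtain r1 where r1: "r1 \<in> tuples n k" "\<mu> = eqtype_rel n k `` {r1}"
        using \<mu> unfolding eq_classes_def by (auto elim: quotientE)
      have "expr 0 (\<lambda>G v. if \<forall>x\<in>{..<k}\<times>{..<k}. (v!(fst x) = v!(snd x)) = (r1!(fst x) = r1!(snd x)) then 1 else 0)"
        by (rule expr_eqs) auto
      hence "expr 0 (\<lambda>G v. b (Suc r) \<mu> j * (if \<forall>x\<in>{..<k}\<times>{..<k}. (v!(fst x) = v!(snd x)) = (r1!(fst x) = r1!(snd x)) then 1 else 0))"
        by (rule expr_scale)
      thus "expr 0 (\<lambda>G v. (if v \<in> \<mu> then 1 else 0) * b (Suc r) \<mu> j)"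
      proof (rule expr_cong)
        fix G v assume v: "v \<in> tuples n k"
        have "(v \<in> \<mu>) \<longleftrightarrow> (\<forall>x\<in>{..<k}\<times>{..<k}. (v!(fst x) = v!(snd x)) = (r1!(fst x) = r1!(snd x)))"
          using r1 v unfolding eqtype_rel_def by auto
        thus "b (Suc r) \<mu> j * (if \<forall>x\<in>{..<k}\<times>{..<k}. (v!(fst x) = v!(snd x)) = (r1!(fst x) = r1!(snd x)) then 1 else 0)
           = (if v \<in> \<mu> then 1 else 0) * b (Suc r) \<mu> j" by simp
      qed
    qed
    have eAB: "expr (Suc r * k) (\<lambda>G v. (\<Sum>\<gamma>\<in>eq_classes n (2 * k). \<Sum>w\<in>tuples n k.
           (if v @ w \<in> \<gamma> then 1 else 0) *
           (\<Sum>i<d r. c (Suc r) \<gamma> i j * ign n l k d c b \<sigma> G r w i))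
        + (\<Sum>\<mu>\<in>eq_classes n k. (if v \<in> \<mu> then 1 else 0) * b (Suc r) \<mu> j))"
      by (rule expr_add[OF eA expr_mono[OF eB]]) simp
    have "expr (Suc r * k) (\<lambda>G v. \<sigma> (Suc r) ((\<Sum>\<gamma>\<in>eq_classes n (2 * k). \<Sum>w\<in>tuples n k.
           (if v @ w \<in> \<gamma> then 1 else 0) *
           (\<Sum>i<d r. c (Suc r) \<gamma> i j * ign n l k d c b \<sigma> G r w i))
        + (\<Sum>\<mu>\<in>eq_classes n k. (if v \<in> \<mu> then 1 else 0) * b (Suc r) \<mu> j)))"
      by (rule expr_fn[OF f eAB])
    thus ?case by simp
  qed
  show ?thesis
  proof (intro allI impI)
    fix j assume j: "j < d t"
    obtain \<phi> where \<phi>: "wf_tl \<Omega> l k \<phi>" "sdepth \<phi> \<le> t * k"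
      "\<And>G \<nu>. (\<forall>i<k. \<nu> i < n) \<Longrightarrow> tl_sem n G \<nu> \<phi> = ign n l k d c b \<sigma> G t (map \<nu> [0..<k]) j"
      using main[OF le_refl j] unfolding expr_def by blast
    show "\<exists>\<phi> \<in> TL \<Omega> l k (t * k). \<forall>G v. is_graph n G \<longrightarrow> v \<in> tuples n k \<longrightarrow>
             tl_sem n G (\<lambda>i. v ! i) \<phi> = ign n l k d c b \<sigma> G t v j"
    proof (intro bexI[of _ \<phi>] allI impI)
      show "\<phi> \<in> TL \<Omega> l k (t * k)" using \<phi> by (simp add: TL_def)
      fix G v assume "is_graph n G" "v \<in> tuples n k"
      hence v: "length v = k" "\<forall>i<k. v!i < n" using tuples_nth by (auto simp: tuples_def)
      have "map (\<lambda>i. v!i) [0..<k] = v" using v(1) map_nth by metis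
      thus "tl_sem n G (\<lambda>i. v ! i) \<phi> = ign n l k d c b \<sigma> G t v j" using \<phi>(3)[of "\<lambda>i. v!i"] v(2) by simp
    qed
  qed
qed

end
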